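(* Let $\psi$ satisfy $0<c_\psi\le\psi(X_i,Y_j)\le C_\psi$ for all $i,j$. Then for each $i$ the cell problem has a unique solution $\chi(X_i,\cdot)\in U^p_\#(\mathbb Z)$. Moreover $\chi(X_{i+N},Y_j)=\chi(X_i,Y_j)$ for all $i,j$, i.e. $\chi\in U^N_{\rm per}(\epsilon\mathbb Z)\otimes U^p_\#(\mathbb Z)$.
   Context: Let $\epsilon>0$ and $N,p$ positive integers; $X_i=\epsilon i$, $Y_j=j$. $U^p_\#(\mathbb Z)$ is the space of $p$-periodic functions $s:\mathbb Z\to\mathbb R$ with $\sum_{j=1}^ps(Y_j)=0$. $\psi:\epsilon\mathbb Z\times\mathbb Z\to\mathbb R$ satisfies $\psi(X_{i+N},Y_j)=\psi(X_i,Y_j)=\psi(X_i,Y_{j+p})$. For a function $g$ of $(X_i,Y_j)$, $D_Yg(X_i,Y_j)=g(X_i,Y_{j+1})-g(X_i,Y_j)$. The cell problem at $X_i$: find a $p$-periodic function $\chi(X_i,\cdot)$ on $\mathbb Z$ with $\frac1p\sum_{j=1}^p\chi(X_i,Y_j)=0$ and $-D_Y(\psi D_Y\chi)(X_i,Y_j)=D_Y\psi(X_i,Y_j)$ for all $j\in\mathbb Z$. *)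

theory Defs
  imports Complex_Main
begin

text \<open>Forward difference in the fast variable: D_Y g (Y_j) = g(Y_{j+1}) - g(Y_j), with Y_j = j.\<close>
definition DY :: "(int \<Rightarrow> real) \<Rightarrow> int \<Rightarrow> real" where
  "DY g j = g (j + 1) - g j"

definition U_sharp :: "nat \<Rightarrow> (int \<Rightarrow> real) set" where
  "U_sharp p = {s. (\<forall>j. s (j + int p) = s j) \<and> (\<Sum>j=1..int p. s j) = 0}"

definition cell_solution ::
  "real \<Rightarrow> nat \<Rightarrow> (real \<Rightarrow> int \<Rightarrow> real) \<Rightarrow> int \<Rightarrow> (int \<Rightarrow> real) \<Rightarrow> bool" where
  "cell_solution eps p psi i c \<longleftrightarrow>
     (\<forall>j. c (j + int p) = c j) \<and>
     (1 / real p) * (\<Sum>j=1..int p. c j) = 0 \<and>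
     (\<forall>j. - DY (\<lambda>k. psi (eps * of_int i) k * DY c k) j = DY (psi (eps * of_int i)) j)"

end

theory Submission
  imports Defs
begin

definition sol :: "nat \<Rightarrow> (int \<Rightarrow> real) \<Rightarrow> (int \<Rightarrow> real) \<Rightarrow> bool" where
  "sol p a c \<longleftrightarrow> (\<forall>j. c (j + int p) = c j) \<and>
     (1 / real p) * (\<Sum>j=1..int p. c j) = 0 \<and>
     (\<forall>j. - DY (\<lambda>k. a k * DY c k) j = DY a j)"

lemma int_shift_const:
  assumes "\<And>j::int. g (j + 1) = (g j :: real)"
  shows "g j = g 0"
proof (induction j rule: int_induct[where k=0])
  case base then show ?case by simp
next
  case (step1 i) then show ?case using assms[of i] by simp
next
  case (step2 i) then show ?case using assms[of "i - 1"] by simp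
qed

lemma const_flux:
  assumes "\<forall>j. - DY (\<lambda>k. a k * DY c k) j = DY a j"
  shows "a j * (DY c j + 1) = a 0 * (DY c 0 + 1)"
proof -
  have "\<And>j. a (j+1) * (DY c (j+1) + 1) = a j * (DY c j + 1)"
  proof -
    fix j
    have "- DY (\<lambda>k. a k * DY c k) j = DY a j" using assms by blast
    then show "a (j+1) * (DY c (j+1) + 1) = a j * (DY c j + 1)"
      unfolding DY_def by (simp add: algebra_simps)
  qed
  then show ?thesis using int_shift_const[of "\<lambda>j. a j * (DY c j + 1)"] by blast
qed

lemma per_mult:
  assumes "\<forall>j. f (j + int p) = f j"
  shows "f (x + int p * int m) = f x"
proof (induction m)
  case 0 then show ?case by simp
next
  case (Suc m)
  have "f (x + int p * int (Suc m)) = f ((x + int p * int m) + int p)"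
    by (simp add: algebra_simps)
  also have "\<dots> = f x" using assms Suc by simp
  finally show ?case .
qed

lemma per_mod:
  assumes "\<forall>j. f (j + int p) = f j"
  shows "f (j mod int p) = f j"
proof -
  have md: "j mod int p = j - j div int p * int p" by (rule minus_div_mult_eq_mod[symmetric])
  show ?thesis
  proof (cases "j div int p \<ge> 0")
    case True
    have e: "int (nat (j div int p)) = j div int p" using True by simp
    have "j = j mod int p + int p * int (nat (j div int p))" unfolding e md by simp
    then have "f j = f (j mod int p + int p * int (nat (j div int p)))" by (rule arg_cong)
    moreover have "f (j mod int p + int p * int (nat (j div int p))) = f (j mod int p)"
      by (rule per_mult[OF assms])
    ultimately show ?thesis by metis
  next
    case False
    have e: "int (nat (- (j div int p))) = - (j div int p)" using False by simp
    have "j mod int p = j + int p * int (nat (- (j div int p)))" unfolding e md by simp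
    then have "f (j mod int p) = f (j + int p * int (nat (- (j div int p))))" by (rule arg_cong)
    moreover have "f (j + int p * int (nat (- (j div int p)))) = f j"
      by (rule per_mult[OF assms])
    ultimately show ?thesis by metis
  qed
qed

lemma sum_reindex_int:
  "(\<Sum>j=1..int p. f j) = (\<Sum>k<p. f (int k + 1))"
proof -
  have "(\<lambda>k. int k + 1) ` {..<p} = {1..int p}"
  proof
    show "{1..int p} \<subseteq> (\<lambda>k. int k + 1) ` {..<p}"
    proof
      fix j assume "j \<in> {1..int p}"
      then have "j = int (nat (j - 1)) + 1" "nat (j - 1) < p" by auto
      then show "j \<in> (\<lambda>k. int k + 1) ` {..<p}" by blast
    qed
  qed auto
  moreover have "inj_on (\<lambda>k. int k + 1) {..<p}" by (auto simp: inj_on_def)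
  ultimately show ?thesis using sum.reindex[of "\<lambda>k. int k + 1" "{..<p}" f] by (simp add: o_def)
qed

lemma sum_shift:
  assumes "\<forall>j. f (j + int p) = (f j :: real)"
  shows "(\<Sum>j=1..int p. f j) = (\<Sum>k<p. f (int k))"
proof -
  have "(\<Sum>k<Suc p. f (int k)) = f 0 + (\<Sum>k<p. f (int (Suc k)))"
    by (subst sum.lessThan_Suc_shift) simp
  moreover have "(\<Sum>k<Suc p. f (int k)) = (\<Sum>k<p. f (int k)) + f (int p)" by simp
  moreover have "f (int p) = f 0" using assms[rule_format, of 0] by simp
  moreover have "(\<Sum>j=1..int p. f j) = (\<Sum>k<p. f (int (Suc k)))"
    unfolding sum_reindex_int by (simp add: add.commute)
  ultimately show ?thesis by linarith
qed

lemma tele: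
  assumes "\<forall>j. c (j + int p) = (c j :: real)"
  shows "(\<Sum>j=1..int p. DY c j) = 0"
proof -
  have "(\<Sum>j=1..int p. DY c j) = (\<Sum>k<p. c (int (Suc k) + 1) - c (int k + 1))"
    unfolding sum_reindex_int DY_def by (simp add: add.commute add.left_commute)
  also have "\<dots> = c (int p + 1) - c 1"
    using sum_lessThan_telescope[of "\<lambda>k. c (int k + 1)" p] by simp
  also have "\<dots> = 0" using assms[rule_format, of 1] by (simp add: add.commute)
  finally show ?thesis .
qed

lemma det:
  assumes p: "p > 0" and apos: "\<forall>j. a j > 0"
    and sc: "sol p a c"
  shows "DY c j = (real p / (\<Sum>j=1..int p. 1 / a j)) / a j - 1"
proof -
  define S where "S = (\<Sum>j=1..int p. 1 / a j)"
  have Spos: "S > 0" unfolding S_def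
    by (rule sum_pos) (use p apos in auto)
  define L where "L = a 0 * (DY c 0 + 1)"
  have eq: "\<forall>j. - DY (\<lambda>k. a k * DY c k) j = DY a j"
    and per: "\<forall>j. c (j + int p) = c j" using sc unfolding sol_def by auto
  have dc: "DY c k = L * (1 / a k) - 1" for k
  proof -
    have "a k * (DY c k + 1) = L" unfolding L_def by (rule const_flux[OF eq])
    moreover have "a k \<noteq> 0" using apos by (metis less_irrefl)
    ultimately show ?thesis by (simp add: field_simps)
  qed
  have "0 = (\<Sum>j=1..int p. DY c j)" using tele[OF per] by simp
  also have "\<dots> = (\<Sum>j=1..int p. L * (1 / a j) - 1)" by (simp add: dc)
  also have "\<dots> = L * S - real p"
    by (simp add: sum_subtractf sum_distrib_left S_def)
  finally have "L = real p / S" using Spos by (simp add: field_simps)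
  then show ?thesis using dc[of j] S_def by simp
qed

lemma unique_sol:
  assumes p: "p > 0" and apos: "\<forall>j. a j > 0" and aper: "\<forall>j. a (j + int p) = a j"
  shows "\<exists>!c. c \<in> U_sharp p \<and> sol p a c"
proof -
  define S where "S = (\<Sum>j=1..int p. 1 / a j)"
  have Spos: "S > 0" unfolding S_def
    by (rule sum_pos) (use p apos in auto)
  define K where "K = real p / S"
  define d where "d j = K / a j - 1" for j
  have dper: "\<forall>j. d (j + int p) = d j" using aper by (simp add: d_def)
  have dsum: "(\<Sum>k<p. d (int k)) = 0"
  proof -
    have "(\<Sum>k<p. d (int k)) = (\<Sum>j=1..int p. d j)" using sum_shift[OF dper] by simp
    also have "\<dots> = (\<Sum>j=1..int p. K * (1 / a j) - 1)" by (simp add: d_def)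
    also have "\<dots> = K * S - real p"
      by (simp add: sum_subtractf sum_distrib_left S_def)
    also have "\<dots> = 0" using Spos by (simp add: K_def)
    finally show ?thesis .
  qed
  define F where "F j = (\<Sum>k<nat (j mod int p). d (int k))" for j
  define M where "M = (\<Sum>j=1..int p. F j) / real p"
  define c where "c j = F j - M" for j
  have DF: "DY F j = d j" for j
  proof -
    define r where "r = j mod int p"
    have r0: "0 \<le> r" and rp: "r < int p" using p unfolding r_def by auto
    have m1: "(j + 1) mod int p = (r + 1) mod int p" unfolding r_def by (simp add: mod_add_left_eq)
    have dj: "d r = d j" unfolding r_def by (rule per_mod[OF dper])
    show ?thesis
    proof (cases "r + 1 < int p")
      case True
      have "(j + 1) mod int p = r + 1" using m1 True r0 by simp
      then have "nat ((j+1) mod int p) = Suc (nat r)" using r0 by simp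
      then have "F (j+1) = F j + d (int (nat r))" unfolding F_def r_def by simp
      then show ?thesis using dj r0 unfolding DY_def by simp
    next
      case False
      then have rr: "r = int p - 1" using rp by simp
      have "(j + 1) mod int p = 0" using m1 rr by simp
      then have F1: "F (j+1) = 0" unfolding F_def by simp
      have ps: "p = Suc (p - 1)" using p by simp
      have "(\<Sum>k<p. d (int k)) = (\<Sum>k<p - 1. d (int k)) + d (int (p - 1))"
        by (subst ps, subst sum.lessThan_Suc) simp
      moreover have "F j = (\<Sum>k<p - 1. d (int k))" unfolding F_def
        using rr r_def by (metis nat_diff_distrib' nat_int nat_one_as_int of_nat_0_le_iff zero_le_one)
      moreover have "int (p - 1) = r" using rr p by simp
      ultimately show ?thesis using F1 dsum dj unfolding DY_def by simp
    qed
  qed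
  have csol: "c \<in> U_sharp p \<and> sol p a c"
  proof -
    have per: "\<forall>j. c (j + int p) = c j" by (simp add: c_def F_def)
    have sum0: "(\<Sum>j=1..int p. c j) = 0"
      using p by (simp add: c_def sum_subtractf M_def)
    have Dc: "DY c k = d k" for k using DF[of k] by (simp add: DY_def c_def)
    have flux: "(\<lambda>k. a k * DY c k) = (\<lambda>k. K - a k)"
    proof
      fix k
      have "a k \<noteq> 0" using apos by (metis less_irrefl)
      then show "a k * DY c k = K - a k" by (simp add: Dc d_def field_simps)
    qed
    have eq: "\<forall>j. - DY (\<lambda>k. a k * DY c k) j = DY a j"
      unfolding flux by (simp add: DY_def)
    show ?thesis using per sum0 eq unfolding U_sharp_def sol_def by simp
  qed
  have uniq: "c1 = c2" if s1: "sol p a c1" and s2: "sol p a c2" for c1 c2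
  proof -
    define e where "e j = c1 j - c2 j" for j
    have "DY e j = 0" for j using det[OF p apos s1, of j] det[OF p apos s2, of j]
      by (simp add: DY_def e_def)
    then have "e (j + 1) = e j" for j unfolding DY_def by simp
    then have ej: "e j = e 0" for j by (rule int_shift_const)
    have "(\<Sum>j=1..int p. c1 j) = 0" "(\<Sum>j=1..int p. c2 j) = 0"
      using s1 s2 p unfolding sol_def by auto
    then have "(\<Sum>j=1..int p. e j) = 0" by (simp add: e_def sum_subtractf)
    moreover have "(\<Sum>j=1..int p. e j) = (\<Sum>j=1..int p. e 0)" by (rule sum.cong[OF refl ej])
    ultimately have "real p * e 0 = 0" by simp
    then have "e 0 = 0" using p by simp
    then show ?thesis using ej by (auto simp: e_def)
  qed
  show ?thesis using csol uniq by blast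
qed

lemma cell_sol_eq: "cell_solution eps p psi i c = sol p (psi (eps * of_int i)) c"
  unfolding cell_solution_def sol_def by simp

theorem proposition4p2:
  fixes eps :: real and N p :: nat and psi :: "real \<Rightarrow> int \<Rightarrow> real"
    and c_psi C_psi :: real
  assumes eps: "eps > 0" and N: "N > 0" and p: "p > 0"
    and per_X: "\<And>i j. psi (eps * of_int (i + int N)) j = psi (eps * of_int i) j"
    and per_Y: "\<And>i j. psi (eps * of_int i) (j + int p) = psi (eps * of_int i) j"
    and c_pos: "0 < c_psi"
    and lower: "\<And>i j. c_psi \<le> psi (eps * of_int i) j"
    and upper: "\<And>i j. psi (eps * of_int i) j \<le> C_psi"
  shows "(\<forall>i. \<exists>!c. c \<in> U_sharp p \<and> cell_solution eps p psi i c) \<and>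
         (\<forall>chi :: int \<Rightarrow> int \<Rightarrow> real.
            (\<forall>i. chi i \<in> U_sharp p \<and> cell_solution eps p psi i (chi i)) \<longrightarrow>
            (\<forall>i j. chi (i + int N) j = chi i j))"
proof -
  have U: "\<exists>!c. c \<in> U_sharp p \<and> sol p (psi (eps * of_int i)) c" for i
  proof (rule unique_sol[OF p])
    show "\<forall>j. 0 < psi (eps * of_int i) j" using lower c_pos by (meson less_le_trans)
    show "\<forall>j. psi (eps * real_of_int i) (j + int p) = psi (eps * real_of_int i) j"
      using per_Y by blast
  qed
  have part2: "chi (i + int N) j = chi i j"
    if h: "\<forall>i. chi i \<in> U_sharp p \<and> cell_solution eps p psi i (chi i)" for chi :: "int \<Rightarrow> int \<Rightarrow> real" and i j
  proof -
    have ea: "psi (eps * of_int (i + int N)) = psi (eps * of_int i)" using per_X by (rule ext)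
    have "chi (i + int N) \<in> U_sharp p \<and> sol p (psi (eps * of_int i)) (chi (i + int N))"
      using h[rule_format, of "i + int N"] unfolding cell_sol_eq ea by simp
    moreover have "chi i \<in> U_sharp p \<and> sol p (psi (eps * of_int i)) (chi i)"
      using h[rule_format, of i] unfolding cell_sol_eq by simp
    ultimately have "chi (i + int N) = chi i" using U[of i] by blast
    then show ?thesis by simp
  qed
  show ?thesis using U part2 unfolding cell_sol_eq by blast
qed

end
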